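(* Define integers $a(n)$ by $\sum_{n\ge0}a(n)q^n=\frac{f_1f_6}{f_2^2f_3}$. Then for all $n\geq 0$, $a(24n+13)\equiv 0\pmod 2$.
   Context: For a positive integer $r$, $f_r=\prod_{k\geq1}(1-q^{rk})$, a formal power series in $q$. *)

theory Defs
  imports "HOL-Computational_Algebra.Formal_Power_Series"
begin

text \<open>f r = prod_{k>=1} (1 - q^(r k)) as an integer formal power series (r >= 1).
  For r >= 1 the n-th coefficient of the infinite product equals the n-th coefficient
  of the finite partial product over k = 1..n, since the remaining factors are
  congruent to 1 modulo q^(n+1).\<close>
definition f :: "nat \<Rightarrow> int fps" where
  "f r = Abs_fps (\<lambda>n. fps_nth (\<Prod>k\<in>{1..n}. (1 - fps_X ^ (r * k))) n)"

end

theory Submission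
  imports Defs "HOL-Library.Z2"
begin

unbundle fps_syntax

declare add_bit_eq_xor[simp del] mult_bit_eq_and[simp del]

lemma bit_add_self: "(a::bit) + a = 0" by (cases a) simp_all
lemma bit_mult_self: "(a::bit) * a = a" by (cases a) simp_all

lemma bf_minus: "(a::bit fps) - b = a + b" by (rule fps_ext) simp
lemma bf_add_self: "(a::bit fps) + a = 0" by (rule fps_ext) (metis fps_add_nth bit_add_self fps_zero_nth)
lemma bf_two: "(2::bit fps) = 0"
  by (metis bf_add_self one_add_one)
lemma bf_sq_add: "((a::bit fps) + b)^2 = a^2 + b^2"
proof -
  have "(a+b)^2 = a^2 + b^2 + (a*b + a*b)" by (simp add: power2_eq_square algebra_simps)
  then show ?thesis by (simp add: bf_add_self)
qed
lemma bf_p4_add: "((a::bit fps) + b)^4 = a^4 + b^4"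
proof -
  have "(a+b)^4 = ((a+b)^2)^2" by (simp flip: power_mult)
  also have "\<dots> = a^4 + b^4" by (simp add: bf_sq_add flip: power_mult)
  finally show ?thesis .
qed
lemma bf_cube_add: "((a::bit fps) + b)^3 = a^3 + a^2*b + a*b^2 + b^3"
proof -
  have "(a+b)^3 = (a+b)^2*(a+b)" by (simp add: power2_eq_square power3_eq_cube)
  also have "\<dots> = a^3 + a^2*b + a*b^2 + b^3" by (simp add: bf_sq_add algebra_simps power2_eq_square power3_eq_cube bf_two)
  finally show ?thesis .
qed

lemma bit_of_int_eq0: "(of_int z :: bit) = 0 \<longleftrightarrow> even z"
proof -
  have "z = 2 * (z div 2) + z mod 2" by simp
  then have "(of_int z :: bit) = of_int (2 * (z div 2)) + of_int (z mod 2)"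
    by (metis of_int_add)
  also have "\<dots> = of_int (z mod 2)" by simp
  finally have e: "(of_int z :: bit) = of_int (z mod 2)" .
  show ?thesis
  proof (cases "even z")
    case True then show ?thesis using e by simp
  next
    case False then have "z mod 2 = 1" by presburger
    then show ?thesis using e False by simp
  qed
qed

definition red :: "int fps \<Rightarrow> bit fps" where "red F = Abs_fps (\<lambda>n. of_int (F $ n))"
lemma red_nth[simp]: "red F $ n = of_int (F $ n)" by (simp add: red_def)
lemma red_mult: "red (F * G) = red F * red G"
  by (rule fps_ext) (simp add: fps_mult_nth)
lemma red_add: "red (F + G) = red F + red G" by (rule fps_ext) simp
lemma red_diff: "red (F - G) = red F - red G" by (rule fps_ext) simp
lemma red_one: "red 1 = 1" by (rule fps_ext) simp
lemma red_Xp: "red (fps_X ^ k) = fps_X ^ k" by (rule fps_ext) simp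
lemma red_power: "red (F ^ k) = red F ^ k" by (induction k) (simp_all add: red_one red_mult)
lemma red_prod: "red (prod h S) = prod (\<lambda>x. red (h x)) S"
  by (induction S rule: infinite_finite_induct) (simp_all add: red_one red_mult)

definition dil :: "nat \<Rightarrow> bit fps \<Rightarrow> bit fps" where "dil k F = F oo fps_X ^ k"

lemma dil_nth: assumes "k > 0" shows "dil k F $ n = (if k dvd n then F $ (n div k) else 0)"
proof -
  have "dil k F $ n = (\<Sum>i=0..n. F $ i * ((fps_X ^ k) ^ i) $ n)" by (simp add: dil_def fps_compose_nth)
  also have "\<dots> = (\<Sum>i=0..n. if i = n div k \<and> k dvd n then F $ i else 0)"
    apply (rule sum.cong, simp)
    using assms by (auto simp: power_mult[symmetric] mult.commute)
  also have "\<dots> = (if k dvd n then F $ (n div k) else 0)"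
    by (cases "k dvd n") (auto simp: sum.delta div_le_dividend)
  finally show ?thesis .
qed

lemma Xk0: "k > 0 \<Longrightarrow> (fps_X ^ k :: bit fps) $ 0 = 0" by simp

lemma dil_mult: "k > 0 \<Longrightarrow> dil k (F * G) = dil k F * dil k G"
  by (simp add: dil_def fps_compose_mult_distrib)
lemma dil_add: "dil k (F + G) = dil k F + dil k G"
  by (simp add: dil_def fps_compose_add_distrib)
lemma dil_power: "k > 0 \<Longrightarrow> dil k (F ^ m) = dil k F ^ m"
  by (simp add: dil_def fps_compose_power)
lemma dil_prod: "k > 0 \<Longrightarrow> dil k (prod h S) = prod (\<lambda>x. dil k (h x)) S"
  by (simp add: dil_def fps_compose_prod_distrib)
lemma dil_one: "dil k 1 = 1" by (simp add: dil_def)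
lemma dil_X: "k > 0 \<Longrightarrow> dil k fps_X = fps_X ^ k" by (simp add: dil_def)
lemma dil_Xp: "k > 0 \<Longrightarrow> dil k (fps_X ^ m) = fps_X ^ (k * m)"
  by (simp add: dil_power dil_X power_mult)
lemma dil_dil: "a > 0 \<Longrightarrow> b > 0 \<Longrightarrow> dil a (dil b F) = dil (a * b) F"
  by (rule fps_ext) (auto simp: dil_nth div_mult2_eq dvd_mult_imp_div intro: dvd_mult_left dest: dvd_mult_left)

unbundle fps_syntax

lemma frob: "(F::bit fps)^2 = dil 2 F"
proof (rule fps_ext)
  fix n
  define h where "h i = F $ i * F $ (n - i)" for i
  have "(F^2) $ n = (\<Sum>i=0..n. h i)" by (simp add: power2_eq_square fps_mult_nth h_def)
  also have "\<dots> = (\<Sum>i=0..n. (if 2*i < n then h i else 0) + (if 2*i = n then h i else 0) + (if n < 2*i then h i else 0))"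
    by (rule sum.cong) auto
  also have "\<dots> = (\<Sum>i=0..n. if 2*i < n then h i else 0) + (\<Sum>i=0..n. if 2*i = n then h i else 0) + (\<Sum>i=0..n. if n < 2*i then h i else 0)"
    by (simp add: sum.distrib)
  also have "(\<Sum>i=0..n. if n < 2*i then h i else 0) = (\<Sum>i=0..n. if n < 2*(n + 0 - i) then h (n + 0 - i) else 0)"
    by (rule sum.atLeastAtMost_rev)
  also have "\<dots> = (\<Sum>i=0..n. if 2*i < n then h i else 0)"
    by (rule sum.cong) (auto simp: h_def mult.commute)
  also have "(\<Sum>i=0..n. if 2*i = n then h i else 0) = (\<Sum>i=0..n. if i = n div 2 then (if even n then h i else 0) else 0)"
    by (rule sum.cong) auto
  also have "\<dots> = (if even n then h (n div 2) else 0)"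
    by (simp add: sum.delta)
  also have "(if even n then h (n div 2) else 0) = dil 2 F $ n"
    by (auto simp: dil_nth h_def bit_mult_self)
  finally show "(F^2) $ n = dil 2 F $ n"
    by (simp add: bit_add_self add.commute add.left_commute)
qed

definition sect :: "nat \<Rightarrow> nat \<Rightarrow> bit fps \<Rightarrow> bit fps" where
  "sect k r F = Abs_fps (\<lambda>p. F $ (k*p + r))"
lemma sect_nth[simp]: "sect k r F $ p = F $ (k*p + r)" by (simp add: sect_def)
lemma sect_add: "sect k r (F + G) = sect k r F + sect k r G" by (rule fps_ext) simp
lemma sect_sect: "sect a r (sect b s F) = sect (b*a) (b*r + s) F"
  by (rule fps_ext) (simp add: algebra_simps)

lemma mod_aux: fixes k p r s q :: nat assumes "k*p + r - s = k*q" "s \<le> k*p + r" "r < k" "s < k" shows "r = s"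
proof -
  have "k*p + r = (k*p + r - s) + s" using assms(2) by arith
  also have "\<dots> = k*q + s" using assms(1) by simp
  finally have "k*p + r = k*q + s" .
  then have "(k*p + r) mod k = (k*q + s) mod k" by simp
  then show ?thesis using assms by simp
qed

lemma sect_Xpow_dil: assumes "r < k" "s < k"
  shows "sect k r (fps_X^s * dil k Z) = (if s = r then Z else 0)"
proof (rule fps_ext)
  fix p
  have k0: "k > 0" using assms by simp
  show "sect k r (fps_X^s * dil k Z) $ p = (if s = r then Z else 0) $ p"
  proof (cases "s = r")
    case True then show ?thesis using k0 by (simp add: fps_X_power_mult_nth dil_nth)
  next
    case False
    have "\<not> (k dvd (k*p + r - s))" if "s \<le> k*p + r"
      using mod_aux[of k p r s] that assms False by (auto elim!: dvdE)
    then show ?thesis using False k0 by (auto simp: fps_X_power_mult_nth dil_nth)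
  qed
qed

lemma sect_mult_dil: assumes "r < k"
  shows "sect k r (F * dil k Z) = sect k r F * Z"
proof (rule fps_ext)
  fix p
  have k0: "k > 0" using assms by simp
  define h where "h i = (if k dvd i then Z $ (i div k) else 0) * F $ (k*p + r - i)" for i
  have "sect k r (F * dil k Z) $ p = (dil k Z * F) $ (k*p + r)" by (simp add: mult.commute)
  also have "\<dots> = (\<Sum>i=0..k*p+r. h i)" by (simp add: fps_mult_nth dil_nth k0 h_def)
  also have "\<dots> = (\<Sum>i\<in>(\<lambda>m. k*m) ` {0..p}. h i)"
  proof (rule sum.mono_neutral_right)
    show "(\<lambda>m. k*m) ` {0..p} \<subseteq> {0..k*p+r}" by (auto intro!: trans_le_add1 mult_le_mono2)
    show "\<forall>i\<in>{0..k*p+r} - (\<lambda>m. k*m) ` {0..p}. h i = 0"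
    proof
      fix i assume i: "i \<in> {0..k*p+r} - (\<lambda>m. k*m) ` {0..p}"
      show "h i = 0"
      proof (cases "k dvd i")
        case True
        then obtain m where m: "i = k*m" by (auto elim: dvdE)
        have "k*m < k*(Suc p)" using i m assms by auto
        then have "m < Suc p" by (simp only: mult_less_cancel1)
        then have "m \<le> p" by simp
        then show ?thesis using i m by auto
      qed (simp add: h_def)
    qed
  qed simp
  also have "\<dots> = (\<Sum>m=0..p. h (k*m))" 
    using k0 by (subst sum.reindex) (auto simp: inj_on_def)
  also have "\<dots> = (\<Sum>m=0..p. Z $ m * F $ (k*(p-m) + r))"
    by (rule sum.cong) (auto simp: h_def k0 diff_mult_distrib2)
  also have "\<dots> = (Z * sect k r F) $ p" by (simp add: fps_mult_nth)
  finally show "sect k r (F * dil k Z) $ p = (sect k r F * Z) $ p" by (simp add: mult.commute)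
qed

definition eqm :: "nat \<Rightarrow> 'a::comm_ring_1 fps \<Rightarrow> 'a fps \<Rightarrow> bool" where
  "eqm k A B \<longleftrightarrow> (\<forall>i<k. A $ i = B $ i)"

lemma eqm_refl[simp]: "eqm k A A" by (simp add: eqm_def)
lemma eqm_sym: "eqm k A B \<Longrightarrow> eqm k B A" by (simp add: eqm_def)
lemma eqm_trans: "eqm k A B \<Longrightarrow> eqm k B C \<Longrightarrow> eqm k A C" by (simp add: eqm_def)
lemma eqm_mono: "eqm k A B \<Longrightarrow> j \<le> k \<Longrightarrow> eqm j A B" by (simp add: eqm_def)
lemma eqm_add: "eqm k A A' \<Longrightarrow> eqm k B B' \<Longrightarrow> eqm k (A + B) (A' + B')"
  by (simp add: eqm_def)
lemma eqm_mult: assumes "eqm k A A'" "eqm k B B'" shows "eqm k (A * B) (A' * B')"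
  unfolding eqm_def
proof (intro allI impI)
  fix i assume "i < k"
  then show "(A * B) $ i = (A' * B') $ i"
    using assms unfolding eqm_def fps_mult_nth by (intro sum.cong) auto
qed
lemma eqm_power: "eqm k A B \<Longrightarrow> eqm k (A ^ m) (B ^ m)"
  by (induction m) (simp_all add: eqm_mult)
lemma eqm_prod: "(\<And>x. x \<in> S \<Longrightarrow> eqm k (h x) (h' x)) \<Longrightarrow> eqm k (prod h S) (prod h' S)"
  by (induction S rule: infinite_finite_induct) (simp_all add: eqm_mult)
lemma eqm_sum: "(\<And>x. x \<in> S \<Longrightarrow> eqm k (h x) (h' x)) \<Longrightarrow> eqm k (sum h S) (sum h' S)"
  by (induction S rule: infinite_finite_induct) (simp_all add: eqm_add)
lemma eqm_1X: "k \<le> e \<Longrightarrow> eqm k (1 + fps_X^e) 1" by (auto simp: eqm_def)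
lemma eqm_X0: "k \<le> e \<Longrightarrow> eqm k (fps_X^e * F) 0" by (auto simp: eqm_def fps_X_power_mult_nth)
lemma eqm_all: "(\<And>k. eqm k A B) \<Longrightarrow> A = B"
  by (rule fps_ext) (auto simp: eqm_def)
lemma eqm_cancel: assumes "eqm k (A * W) (B * W)" "W $ 0 \<noteq> (0::'a::field)"
  shows "eqm k A B"
proof -
  have "eqm k (A * W * inverse W) (B * W * inverse W)" using assms(1) eqm_mult eqm_refl by blast
  then show ?thesis using assms(2) by (simp add: mult.assoc inverse_mult_eq_1')
qed

definition g :: "nat \<Rightarrow> bit fps" where "g r = red (f r)"

lemma g_nth: "g r $ i = (\<Prod>k<i. 1 + fps_X^(r*(k+1))) $ i"
proof -
  have "g r $ i = red (\<Prod>k\<in>{1..i}. (1 - fps_X ^ (r * k))) $ i"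
    by (simp add: g_def f_def)
  also have "red (\<Prod>k\<in>{1..i}. (1 - fps_X ^ (r * k))) = (\<Prod>k\<in>{Suc 0..i}. 1 + fps_X ^ (r * k))"
    by (simp add: red_prod red_diff red_one red_Xp bf_minus)
  also have "\<dots> = (\<Prod>k<i. 1 + fps_X^(r*(k+1)))"
    by (simp add: prod.atLeast1_atMost_eq)
  finally show ?thesis .
qed

lemma prod_trunc: assumes "r > 0" "i \<le> N"
  shows "eqm (Suc i) (\<Prod>k<N. 1 + fps_X^(r*(k+1)) :: bit fps) (\<Prod>k<i. 1 + fps_X^(r*(k+1)))"
proof -
  define u where "u k = (1 + fps_X^(r*(k+1)) :: bit fps)" for k
  have e: "{..<N} = {..<i} \<union> {i..<N}" using assms by auto
  have "prod u ({..<i} \<union> {i..<N}) = prod u {..<i} * prod u {i..<N}"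
    by (rule prod.union_disjoint) auto
  then have 1: "prod u {..<N} = prod u {..<i} * prod u {i..<N}" by (simp only: e)
  have 2: "eqm (Suc i) (prod u {i..<N}) (\<Prod>k\<in>{i..<N}. 1)"
  proof (rule eqm_prod)
    fix k assume "k \<in> {i..<N}"
    then have "Suc i \<le> k + 1" by simp
    also have "k + 1 \<le> r*(k+1)" using assms(1) mult_le_mono1[of 1 r "k+1"] by simp
    finally have "Suc i \<le> r*(k+1)" .
    then show "eqm (Suc i) (u k) 1" unfolding u_def by (rule eqm_1X)
  qed
  have "eqm (Suc i) (prod u {..<i} * prod u {i..<N}) (prod u {..<i} * 1)"
    using eqm_mult[OF eqm_refl 2] by simp
  then have "eqm (Suc i) (prod u {..<N}) (prod u {..<i})" using 1 by simp
  then show ?thesis unfolding u_def .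
qed

lemma g_trunc: assumes "r > 0" "i \<le> N"
  shows "eqm (Suc i) (g r) (\<Prod>k<N. 1 + fps_X^(r*(k+1)))"
  unfolding eqm_def
proof (intro allI impI)
  fix j assume "j < Suc i"
  then have "j \<le> N" using assms by simp
  from prod_trunc[OF assms(1) this] show "g r $ j = (\<Prod>k<N. 1 + fps_X^(r*(k+1))) $ j"
    by (simp add: g_nth eqm_def)
qed

lemma g_dil: assumes "r > 0" "k > 0" shows "g (k*r) = dil k (g r)"
proof (rule fps_ext)
  fix n
  have "g (k*r) $ n = (\<Prod>l<n. 1 + fps_X^(k*r*(l+1))) $ n" by (simp add: g_nth)
  also have "(\<Prod>l<n. 1 + fps_X^(k*r*(l+1))) = dil k (\<Prod>l<n. 1 + fps_X^(r*(l+1)))"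
    using assms by (simp add: dil_prod dil_add dil_one dil_Xp algebra_simps)
  also have "dil k (\<Prod>l<n. 1 + fps_X^(r*(l+1))) $ n = dil k (g r) $ n"
  proof (cases "k dvd n")
    case True
    have "n div k \<le> n" by simp
    from g_trunc[OF assms(1) this] have "g r $ (n div k) = (\<Prod>l<n. 1 + fps_X^(r*(l+1))) $ (n div k)"
      by (simp add: eqm_def)
    then show ?thesis using True assms by (simp add: dil_nth)
  next
    case False
    then show ?thesis using assms by (simp add: dil_nth)
  qed
  finally show "g (k*r) $ n = dil k (g r) $ n" .
qed

lemma g_frob: "r > 0 \<Longrightarrow> g (2*r) = (g r)^2"
  using g_dil[of r 2] frob[of "g r"] by simp

lemma g_0: "g r $ 0 = 1" by (simp add: g_nth)
lemma g_ne0: "g r \<noteq> 0"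
proof
  assume "g r = 0"
  then have "g r $ 0 = 0" by simp
  then show False using g_0[of r] by simp
qed

definition tri :: "nat \<Rightarrow> nat" where "tri j = (\<Sum>i<j. i)"
lemma tri_0[simp]: "tri 0 = 0" by (simp add: tri_def)
lemma tri_Suc: "tri (Suc j) = tri j + j" by (simp add: tri_def)
lemma tri_2: "2 * tri j = j * (j - 1)"
proof (induction j)
  case (Suc j) then show ?case by (cases j) (simp_all add: tri_Suc algebra_simps)
qed simp

fun gb :: "'a::comm_ring_1 \<Rightarrow> nat \<Rightarrow> nat \<Rightarrow> 'a" where
  "gb Q m 0 = 1"
| "gb Q 0 (Suc j) = 0"
| "gb Q (Suc m) (Suc j) = gb Q m (Suc j) + Q^(m - j) * gb Q m j"

lemma gb_zero: "m < j \<Longrightarrow> gb Q m j = 0"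
proof (induction m arbitrary: j)
  case 0 then show ?case by (cases j) auto
next
  case (Suc m) then show ?case by (cases j) auto
qed

definition qp :: "'a::comm_ring_1 \<Rightarrow> nat \<Rightarrow> 'a" where "qp Q n = (\<Prod>i<n. 1 - Q^(Suc i))"
lemma qp_0[simp]: "qp Q 0 = 1" by (simp add: qp_def)
lemma qp_Suc: "qp Q (Suc n) = qp Q n * (1 - Q^(Suc n))" by (simp add: qp_def)

lemma cauchy: "(\<Prod>i<m. x + y * Q^i) = (\<Sum>j\<le>m. gb Q m j * Q^(tri j) * y^j * x^(m-j))"
proof (induction m)
  case 0 then show ?case by simp
next
  case (Suc m)
  define c where "c j = gb Q m j * Q^(tri j) * y^j * x^(m-j)" for j
  have "(\<Prod>i<Suc m. x + y * Q^i) = (\<Sum>j\<le>m. c j) * (x + y * Q^m)"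
    using Suc by (simp add: c_def)
  also have "\<dots> = (\<Sum>j\<le>m. c j * x) + (\<Sum>j\<le>m. c j * (y * Q^m))"
    by (simp add: sum_distrib_right distrib_left sum.distrib)
  also have "(\<Sum>j\<le>m. c j * x) = (\<Sum>j\<le>Suc m. gb Q m j * Q^(tri j) * y^j * x^(Suc m - j))"
  proof -
    have "(\<Sum>j\<le>m. c j * x) = (\<Sum>j\<le>m. gb Q m j * Q^(tri j) * y^j * x^(Suc m - j))"
      by (rule sum.cong) (auto simp: c_def Suc_diff_le mult.assoc mult.commute)
    then show ?thesis by (simp add: gb_zero)
  qed
  also have "\<dots> = x^(Suc m) + (\<Sum>j\<le>m. gb Q m (Suc j) * Q^(tri (Suc j)) * y^(Suc j) * x^(m - j))"
    by (subst sum.atMost_Suc_shift) simp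
  also have "(\<Sum>j\<le>m. c j * (y * Q^m)) = (\<Sum>j\<le>m. Q^(m-j) * gb Q m j * Q^(tri (Suc j)) * y^(Suc j) * x^(m - j))"
  proof (rule sum.cong)
    fix j assume "j \<in> {..m}"
    then have "m - j + tri (Suc j) = tri j + m" by (simp add: tri_Suc)
    then have "Q^(m-j) * Q^(tri (Suc j)) = Q^(tri j) * Q^m"
      by (metis power_add)
    then show "c j * (y * Q^m) = Q^(m-j) * gb Q m j * Q^(tri (Suc j)) * y^(Suc j) * x^(m - j)"
      unfolding c_def by (simp add: algebra_simps)
  qed simp
  also have "x^(Suc m) + (\<Sum>j\<le>m. gb Q m (Suc j) * Q^(tri (Suc j)) * y^(Suc j) * x^(m - j))
      + (\<Sum>j\<le>m. Q^(m-j) * gb Q m j * Q^(tri (Suc j)) * y^(Suc j) * x^(m - j))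
      = x^(Suc m) + (\<Sum>j\<le>m. gb Q (Suc m) (Suc j) * Q^(tri (Suc j)) * y^(Suc j) * x^(m - j))"
    by (simp add: sum.distrib[symmetric] algebra_simps)
  also have "\<dots> = (\<Sum>j\<le>Suc m. gb Q (Suc m) j * Q^(tri j) * y^j * x^(Suc m - j))"
    by (simp only: sum.atMost_Suc_shift) simp
  finally show ?case .
qed

lemma gb_qp: "j \<le> m \<Longrightarrow> gb Q m j * qp Q j * qp Q (m - j) = qp Q m"
proof (induction m arbitrary: j)
  case 0 then show ?case by simp
next
  case (Suc m)
  show ?case
  proof (cases j)
    case 0 then show ?thesis by simp
  next
    case (Suc k)
    then have km: "k \<le> m" using Suc.prems by simp
    show ?thesis
    proof (cases "k = m")
      case True
      have gbm: "gb Q m m * qp Q m = qp Q m" using Suc.IH[of m] by simp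
      have "gb Q (Suc m) j * qp Q j * qp Q (Suc m - j) = (gb Q m m * qp Q m) * (1 - Q^(Suc m))"
        using True Suc by (simp add: gb_zero qp_Suc mult.assoc)
      then show ?thesis using gbm by (simp add: qp_Suc)
    next
      case False
      then have km': "k < m" using km by simp
      have IH1: "gb Q m (Suc k) * qp Q (Suc k) * qp Q (m - Suc k) = qp Q m" using Suc.IH[of "Suc k"] km' by simp
      have IH2: "gb Q m k * qp Q k * qp Q (m - k) = qp Q m" using Suc.IH[of k] km by simp
      have e1: "qp Q (m - k) = qp Q (m - Suc k) * (1 - Q^(m - k))"
        using km' qp_Suc[of Q "m - Suc k"] by (simp add: Suc_diff_Suc)
      have "m - k + Suc k = Suc m" using km' by simp
      then have e2: "Q^(m-k) * Q^(Suc k) = Q^(Suc m)" by (metis power_add)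
      have "gb Q (Suc m) j * qp Q j * qp Q (Suc m - j)
          = (gb Q m (Suc k) + Q^(m - k) * gb Q m k) * (qp Q k * (1 - Q^(Suc k))) * qp Q (m - k)"
        using Suc by (simp add: qp_Suc)
      also have "\<dots> = (gb Q m (Suc k) * qp Q (Suc k) * qp Q (m - Suc k)) * (1 - Q^(m-k))
          + Q^(m-k) * (gb Q m k * qp Q k * qp Q (m - k)) * (1 - Q^(Suc k))"
        by (simp add: e1 qp_Suc algebra_simps)
      also have "\<dots> = qp Q m * (1 - Q^(m-k)) + Q^(m-k) * qp Q m * (1 - Q^(Suc k))"
        by (simp only: IH1 IH2)
      also have "\<dots> = qp Q m * (1 - Q^(m-k) * Q^(Suc k))" by (simp add: algebra_simps)
      also have "\<dots> = qp Q (Suc m)" by (simp only: e2 qp_Suc)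
      finally show ?thesis .
    qed
  qed
qed

unbundle fps_syntax

definition ev :: "int \<Rightarrow> int \<Rightarrow> int \<Rightarrow> int" where "ev b c t = b*t*(t-1) + 2*c*t"

lemma ev_bound: assumes "0 < c" "c < b" shows "2 * \<bar>t\<bar> \<le> ev b c t"
proof (cases "t \<ge> 0")
  case True
  have "0 \<le> t*(t-1)" using True by (cases "t = 0") (auto intro: mult_nonneg_nonneg)
  then have "0 \<le> b*(t*(t-1))" using assms by simp
  moreover have "2*t \<le> 2*c*t" using assms True by (simp add: mult_right_mono)
  ultimately show ?thesis using True by (simp add: ev_def algebra_simps)
next
  case False
  define s where "s = -t"
  have s1: "s \<ge> 1" using False s_def by simp
  have "b*(s+1) \<ge> b*2" using s1 assms by (intro mult_left_mono) auto
  then have "b*(s+1) - 2*c \<ge> 2" using assms by linarith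
  then have "s*(b*(s+1) - 2*c) \<ge> s*2" using s1 by (intro mult_left_mono) auto
  moreover have "ev b c t = s*(b*(s+1) - 2*c)" by (simp add: ev_def s_def algebra_simps)
  ultimately show ?thesis using False s_def by simp
qed

lemma ev_even: "even (ev b c t)"
proof -
  have "even (t*(t-1))" by simp
  then show ?thesis by (simp add: ev_def mult.assoc)
qed

lemma ev_inj: assumes "0 < c" "c < b" "b \<noteq> 2*c" "ev b c s = ev b c t" shows "s = t"
proof (rule ccontr)
  assume st: "s \<noteq> t"
  have "ev b c s - ev b c t = (s - t) * (b*(s+t-1) + 2*c)" by (simp add: ev_def algebra_simps)
  then have "(s - t) * (b*(s+t-1) + 2*c) = 0" using assms by simp
  then have z: "b*(s+t-1) = -2*c" using st by simp
  consider "s+t-1 \<ge> 0" | "s+t-1 = -1" | "s+t-1 \<le> -2" by linarith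
  then show False
  proof cases
    case 1 then have "b*(s+t-1) \<ge> 0" using assms by simp
    then show False using z assms by simp
  next
    case 2 then show False using z assms by simp
  next
    case 3 then have "b*(s+t-1) \<le> b*(-2)" using assms by (intro mult_left_mono) auto
    then show False using z assms by simp
  qed
qed

definition theta :: "nat \<Rightarrow> nat \<Rightarrow> bit fps" where
  "theta b c = Abs_fps (\<lambda>i. of_bool (\<exists>t. ev (int b) (int c) t = 2 * int i))"

definition EE :: "nat \<Rightarrow> nat \<Rightarrow> nat \<Rightarrow> nat \<Rightarrow> nat" where
  "EE b c n j = nat (ev (int b) (int c) (int j - int n) div 2)"

lemma EE_2: assumes "0 < c" "c < b" shows "2 * int (EE b c n j) = ev (int b) (int c) (int j - int n)"
proof -
  have "2 * \<bar>int j - int n\<bar> \<le> ev (int b) (int c) (int j - int n)"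
    by (rule ev_bound) (use assms in auto)
  moreover have "0 \<le> 2 * \<bar>int j - int n\<bar>" by simp
  ultimately have "ev (int b) (int c) (int j - int n) \<ge> 0" by (rule order_trans[rotated])
  then show ?thesis using ev_even[of "int b" "int c" "int j - int n"] by (simp add: EE_def)
qed

definition LP :: "nat \<Rightarrow> nat \<Rightarrow> nat \<Rightarrow> bit fps" where
  "LP b c n = (\<Prod>k<n. (1 + fps_X^(b*k + (b-c))) * (1 + fps_X^(b*k + c)))"

lemma prod_split_add: fixes n :: nat shows "prod h {..<m+n} = prod h {..<m} * prod (\<lambda>i. h (m+i)) {..<n}"
  by (induction n) (simp_all add: mult.assoc)

lemma expo: assumes "0 < c" "c < b" "1 \<le> n" "j \<le> 2*n"
  shows "b * tri j + (b*(n-1) + (b-c)) * (2*n - j) = b * tri n + n * (b*(n-1) + (b-c)) + EE b c n j"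
proof -
  have t2: "2 * int (tri m) = int m * (int m - 1)" for m
  proof -
    have "int (2 * tri m) = int (m * (m - 1))" by (simp only: tri_2)
    then show ?thesis by (cases m) (simp_all add: algebra_simps)
  qed
  have "b*(n-1) + b = b*n" using assms by (cases n) auto
  then have bn: "b*(n-1) + (b-c) = b*n - c" using assms by arith
  have "b \<le> b*n" using assms by simp
  then have "c \<le> b*n" using assms by linarith
  then have a: "int (b*n - c) = int b * int n - int c" by (simp add: of_nat_diff)
  have d: "int (2*n - j) = 2 * int n - int j" using assms by (simp add: of_nat_diff)
  have "2 * int (b * tri j + (b*n - c) * (2*n - j)) = int b * (2 * int (tri j)) + 2 * (int b * int n - int c) * (2 * int n - int j)"
    by (simp only: of_nat_add of_nat_mult a d) (simp add: algebra_simps)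
  also have "\<dots> = int b * (2 * int (tri n)) + 2 * int n * (int b * int n - int c) + ev (int b) (int c) (int j - int n)"
    by (simp only: t2) (simp add: ev_def algebra_simps)
  also have "\<dots> = 2 * int (b * tri n + n * (b*n - c) + EE b c n j)"
    by (simp only: of_nat_add of_nat_mult a) (simp add: algebra_simps EE_2[OF assms(1,2)])
  finally have h: "2 * int (b * tri j + (b*n - c) * (2*n - j)) = 2 * int (b * tri n + n * (b*n - c) + EE b c n j)" .
  have "int (b * tri j + (b*n - c) * (2*n - j)) = int (b * tri n + n * (b*n - c) + EE b c n j)"
    using h by (simp only: mult_cancel_left) simp
  then have "b * tri j + (b*n - c) * (2*n - j) = b * tri n + n * (b*n - c) + EE b c n j" by (simp only: of_nat_eq_iff)
  then show ?thesis by (simp only: bn)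
qed

lemma jtp_lhs: assumes "0 < c" "c < b" "1 \<le> n"
  shows "(\<Prod>i<2*n. fps_X^(b*(n-1) + (b-c)) + 1 * (fps_X^b)^i :: bit fps)
    = fps_X^(b * tri n + n * (b*(n-1) + (b-c))) * LP b c n"
proof -
  define x :: "bit fps" where "x = fps_X^(b*(n-1) + (b-c))"
  define h where "h i = x + 1 * (fps_X^b)^i" for i
  have "prod h {..<2*n} = prod h {..<n+n}" by (simp add: mult_2)
  also have "\<dots> = prod h {..<n} * prod (\<lambda>i. h (n+i)) {..<n}" by (rule prod_split_add)
  also have "prod h {..<n} = (\<Prod>i<n. fps_X^(b*i) * (1 + fps_X^(b*(n - Suc i) + (b-c))))"
  proof (rule prod.cong)
    fix i assume "i \<in> {..<n}"
    then have "b*i + (b*(n - Suc i) + (b-c)) = b*(n-1) + (b-c)"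
      by (simp add: add.assoc[symmetric] distrib_left[symmetric])
    then have e: "fps_X^(b*i) * fps_X^(b*(n - Suc i) + (b-c)) = (fps_X^(b*(n-1) + (b-c)) :: bit fps)"
      by (simp only: power_add[symmetric])
    have "fps_X^(b*i) * (1 + fps_X^(b*(n - Suc i) + (b-c))) = fps_X^(b*i) + (fps_X^(b*(n-1) + (b-c)) :: bit fps)"
      by (simp only: distrib_left e mult_1_right)
    then show "h i = fps_X^(b*i) * (1 + fps_X^(b*(n - Suc i) + (b-c)))"
      by (simp add: h_def x_def add.commute flip: power_mult)
  qed simp
  also have "\<dots> = (\<Prod>i<n. fps_X^(b*i)) * (\<Prod>i<n. 1 + fps_X^(b*(n - Suc i) + (b-c)))"
    by (rule prod.distrib)
  also have "(\<Prod>i<n. fps_X^(b*i) :: bit fps) = fps_X^(b * tri n)"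
    by (simp add: power_sum tri_def sum_distrib_left)
  also have "(\<Prod>i<n. 1 + fps_X^(b*(n - Suc i) + (b-c)) :: bit fps) = (\<Prod>k<n. 1 + fps_X^(b*k + (b-c)))"
    by (rule prod.nat_diff_reindex)
  also have "(\<Prod>i<n. h (n+i)) = (\<Prod>i<n. x * (1 + fps_X^(b*i + c)))"
  proof (rule prod.cong)
    fix i assume "i \<in> {..<n}"
    have "b*(n-1) + (b-c) + (b*i + c) = b*(n+i)"
      using assms by (cases n) (simp_all add: algebra_simps)
    then have e: "fps_X^(b*(n-1) + (b-c)) * fps_X^(b*i + c) = (fps_X^(b*(n+i)) :: bit fps)"
      by (simp only: power_add[symmetric])
    have "x * (1 + fps_X^(b*i + c)) = x + fps_X^(b*(n+i))"
      by (simp only: x_def distrib_left e mult_1_right)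
    then show "h (n+i) = x * (1 + fps_X^(b*i + c))"
      by (simp add: h_def flip: power_mult)
  qed simp
  also have "\<dots> = x^n * (\<Prod>i<n. 1 + fps_X^(b*i + c))"
    by (simp add: prod.distrib)
  finally have "prod h {..<2*n} = fps_X^(b * tri n) * (\<Prod>k<n. 1 + fps_X^(b*k + (b-c))) * (x^n * (\<Prod>i<n. 1 + fps_X^(b*i + c)))" .
  also have "\<dots> = fps_X^(b * tri n + n * (b*(n-1) + (b-c))) * LP b c n"
  proof -
    have lp: "LP b c n = (\<Prod>k<n. 1 + fps_X^(b*k + (b-c))) * (\<Prod>i<n. 1 + fps_X^(b*i + c))"
      by (simp only: LP_def prod.distrib)
    have xn: "x^n = fps_X^(n * (b*(n-1) + (b-c)))" unfolding x_def
      by (simp only: power_mult[symmetric] mult.commute)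
    show ?thesis by (simp only: lp xn power_add) (simp only: ac_simps)
  qed
  finally show ?thesis by (simp add: h_def x_def)
qed

lemma finite_jtp: assumes "0 < c" "c < b" "1 \<le> n"
  shows "LP b c n = (\<Sum>j\<le>2*n. gb (fps_X^b) (2*n) j * fps_X^(EE b c n j))"
proof -
  define K where "K = b * tri n + n * (b*(n-1) + (b-c))"
  have "fps_X^K * LP b c n = (\<Prod>i<2*n. fps_X^(b*(n-1) + (b-c)) + 1 * (fps_X^b)^i :: bit fps)"
    using jtp_lhs[OF assms] by (simp add: K_def)
  also have "\<dots> = (\<Sum>j\<le>2*n. gb (fps_X^b) (2*n) j * (fps_X^b)^(tri j) * 1^j * (fps_X^(b*(n-1) + (b-c)))^(2*n-j))"
    by (rule cauchy)
  also have "\<dots> = (\<Sum>j\<le>2*n. fps_X^K * (gb (fps_X^b) (2*n) j * fps_X^(EE b c n j)))"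
  proof (rule sum.cong)
    fix j assume "j \<in> {..2*n}"
    then have "b * tri j + (b*(n-1) + (b-c)) * (2*n - j) = K + EE b c n j"
      using expo[OF assms] by (simp add: K_def)
    then have "(fps_X^b)^(tri j) * (fps_X^(b*(n-1) + (b-c)))^(2*n-j) = (fps_X^K * fps_X^(EE b c n j) :: bit fps)"
      by (simp flip: power_mult power_add)
    then have "(gb (fps_X^b) (2*n) j :: bit fps) * ((fps_X^b)^(tri j) * (fps_X^(b*(n-1) + (b-c)))^(2*n-j)) = gb (fps_X^b) (2*n) j * (fps_X^K * fps_X^(EE b c n j))"
      by (rule arg_cong)
    then show "(gb (fps_X^b) (2*n) j :: bit fps) * (fps_X^b)^(tri j) * 1^j * (fps_X^(b*(n-1) + (b-c)))^(2*n-j) = fps_X^K * (gb (fps_X^b) (2*n) j * fps_X^(EE b c n j))"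
      by (simp only: power_one mult_1_right mult.assoc mult.left_commute[of "gb (fps_X^b) (2*n) j"])
  qed simp
  also have "\<dots> = fps_X^K * (\<Sum>j\<le>2*n. gb (fps_X^b) (2*n) j * fps_X^(EE b c n j))"
    by (simp add: sum_distrib_left)
  finally show ?thesis by simp
qed

unbundle fps_syntax

lemma qp_X: "qp (fps_X^b :: bit fps) l = (\<Prod>k<l. 1 + fps_X^(b*(k+1)))"
  unfolding qp_def
proof (rule prod.cong)
  fix k
  have "(fps_X^b)^(Suc k) = (fps_X^(b*(k+1)) :: bit fps)" by (simp only: power_mult[symmetric] Suc_eq_plus1)
  then show "1 - (fps_X^b)^(Suc k) = (1 + fps_X^(b*(k+1)) :: bit fps)" by (simp only: bf_minus)
qed simp

lemma qp_trunc: assumes "b > 0" "i \<le> l"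
  shows "eqm (Suc i) (qp (fps_X^b :: bit fps) l) (qp (fps_X^b) i)"
  unfolding qp_X by (rule prod_trunc[OF assms])

lemma qp_nth0: "b > 0 \<Longrightarrow> qp (fps_X^b :: bit fps) l $ 0 = 1"
proof -
  assume "b > 0"
  have "eqm (Suc 0) (qp (fps_X^b :: bit fps) l) (qp (fps_X^b) 0)" by (rule qp_trunc) (use \<open>b>0\<close> in auto)
  then show ?thesis by (simp add: eqm_def)
qed

lemma theta_nth: "theta b c $ i = of_bool (\<exists>t. ev (int b) (int c) t = 2 * int i)"
  by (simp add: theta_def)

lemma jtp_lim: assumes "0 < c" "c < b" "b \<noteq> 2*c" "2*i < n"
  shows "theta b c $ i = (qp (fps_X^b) n * LP b c n) $ i"
proof -
  have n1: "1 \<le> n" using assms by simp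
  have b0: "b > 0" using assms by simp
  define W where "W = qp (fps_X^b :: bit fps) n"
  define Q0 where "Q0 = qp (fps_X^b :: bit fps) i"
  have Q00: "Q0 $ 0 \<noteq> 0" using qp_nth0[OF b0] by (simp add: Q0_def)
  have e1: "qp (fps_X^b) n * LP b c n = (\<Sum>j\<le>2*n. (gb (fps_X^b) (2*n) j * W) * fps_X^(EE b c n j))"
    by (simp add: finite_jtp[OF assms(1,2) n1] sum_distrib_left W_def ac_simps)
  have key: "eqm (Suc i) (\<Sum>j\<le>2*n. (gb (fps_X^b) (2*n) j * W) * fps_X^(EE b c n j)) (\<Sum>j\<le>2*n. fps_X^(EE b c n j))"
  proof (rule eqm_sum)
    fix j assume j: "j \<in> {..2*n}"
    show "eqm (Suc i) ((gb (fps_X^b) (2*n) j * W) * fps_X^(EE b c n j)) (fps_X^(EE b c n j))"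
    proof (cases "Suc i \<le> EE b c n j")
      case True
      have "eqm (Suc i) (fps_X^(EE b c n j) * (gb (fps_X^b) (2*n) j * W)) 0" by (rule eqm_X0[OF True])
      moreover have "eqm (Suc i) (fps_X^(EE b c n j) * 1) 0" by (rule eqm_X0[OF True])
      ultimately show ?thesis by (simp add: mult.commute eqm_def)
    next
      case False
      have "2 * \<bar>int j - int n\<bar> \<le> ev (int b) (int c) (int j - int n)"
        by (rule ev_bound) (use assms in auto)
      also have "\<dots> = 2 * int (EE b c n j)" using EE_2[OF assms(1,2)] by simp
      finally have "\<bar>int j - int n\<bar> \<le> int i" using False by simp
      then have ij: "i \<le> j" "i \<le> 2*n - j" "j \<le> 2*n" using assms j by auto
      have gbq: "gb (fps_X^b) (2*n) j * qp (fps_X^b) j * qp (fps_X^b) (2*n - j) = (qp (fps_X^b) (2*n) :: bit fps)"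
        by (rule gb_qp) (use ij in simp)
      have "eqm (Suc i) (gb (fps_X^b) (2*n) j * qp (fps_X^b) j * qp (fps_X^b) (2*n - j)) (gb (fps_X^b) (2*n) j * Q0 * Q0)"
        unfolding Q0_def by (intro eqm_mult eqm_refl qp_trunc b0 ij)
      then have "eqm (Suc i) (gb (fps_X^b) (2*n) j * Q0 * Q0) (qp (fps_X^b) (2*n))"
        using gbq eqm_sym by metis
      moreover have "eqm (Suc i) (qp (fps_X^b) (2*n)) (1 * Q0)" unfolding Q0_def
        using qp_trunc[OF b0, of i "2*n"] assms by simp
      ultimately have "eqm (Suc i) ((gb (fps_X^b) (2*n) j * Q0) * Q0) (1 * Q0)" by (rule eqm_trans)
      then have "eqm (Suc i) (gb (fps_X^b) (2*n) j * Q0) 1" using Q00 by (rule eqm_cancel)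
      moreover have "eqm (Suc i) W Q0" unfolding W_def Q0_def using qp_trunc[OF b0, of i n] assms by simp
      ultimately have "eqm (Suc i) (gb (fps_X^b) (2*n) j * W) 1"
        using eqm_trans eqm_mult[OF eqm_refl] by metis
      then have "eqm (Suc i) ((gb (fps_X^b) (2*n) j * W) * fps_X^(EE b c n j)) (1 * fps_X^(EE b c n j))"
        by (rule eqm_mult) simp
      then show ?thesis by simp
    qed
  qed
  have sumi: "(\<Sum>j\<le>2*n. fps_X^(EE b c n j) :: bit fps) $ i = theta b c $ i"
  proof (cases "\<exists>t. ev (int b) (int c) t = 2 * int i")
    case True
    then obtain t where t: "ev (int b) (int c) t = 2 * int i" by blast
    have "2 * \<bar>t\<bar> \<le> ev (int b) (int c) t" by (rule ev_bound) (use assms in auto)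
    then have tb: "\<bar>t\<bar> \<le> int i" using t by simp
    define j0 where "j0 = nat (t + int n)"
    have j0i: "int j0 = t + int n" using tb assms by (simp add: j0_def)
    have j0le: "j0 \<le> 2*n" using j0i tb assms by linarith
    have iff: "(i = EE b c n j) \<longleftrightarrow> j = j0" if "j \<le> 2*n" for j
    proof
      assume "i = EE b c n j"
      then have "ev (int b) (int c) (int j - int n) = ev (int b) (int c) t"
        using EE_2[OF assms(1,2), of n j] t by simp
      then have "int j - int n = t" using ev_inj[of "int c" "int b" "int j - int n" t] assms by simp
      then show "j = j0" using j0i by simp
    next
      assume "j = j0"
      then have "2 * int (EE b c n j) = 2 * int i" using EE_2[OF assms(1,2), of n j] t j0i by simp
      then show "i = EE b c n j" by simp
    qed
    have "(\<Sum>j\<le>2*n. fps_X^(EE b c n j) :: bit fps) $ i = (\<Sum>j\<le>2*n. if i = EE b c n j then 1 else 0)"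
      by (simp add: fps_sum_nth)
    also have "\<dots> = (\<Sum>j\<le>2*n. if j = j0 then 1 else 0)"
      by (rule sum.cong[OF refl]) (simp add: iff)
    also have "\<dots> = 1" using j0le by (simp add: sum.delta)
    finally show ?thesis using True by (simp add: theta_nth)
  next
    case False
    have "(\<Sum>j\<le>2*n. fps_X^(EE b c n j) :: bit fps) $ i = (\<Sum>j\<le>2*n. 0)"
    proof (simp only: fps_sum_nth, rule sum.cong)
      fix j assume "j \<in> {..2*n}"
      have "i \<noteq> EE b c n j"
      proof
        assume "i = EE b c n j"
        then have "ev (int b) (int c) (int j - int n) = 2 * int i" using EE_2[OF assms(1,2), of n j] by simp
        then show False using False by blast
      qed
      then show "(fps_X^(EE b c n j) :: bit fps) $ i = 0" by simp
    qed simp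
    then show ?thesis using False by (simp add: theta_nth)
  qed
  have "(qp (fps_X^b) n * LP b c n) $ i = (\<Sum>j\<le>2*n. fps_X^(EE b c n j) :: bit fps) $ i"
    using key e1 by (simp add: eqm_def)
  then show ?thesis using sumi by simp
qed

unbundle fps_syntax

definition G :: "nat \<Rightarrow> bit fps" where "G N = (\<Prod>k<N. 1 + fps_X^(Suc k))"
lemma G_Suc: "G (Suc N) = G N * (1 + fps_X^(Suc N))" by (simp add: G_def)

lemma g1_G: "i \<le> N \<Longrightarrow> eqm (Suc i) (g 1) (G N)"
  using g_trunc[of 1 i N] by (simp add: G_def)

lemma sq1: "(1 + fps_X^a :: bit fps)^2 = 1 + fps_X^(2*a)"
  by (simp add: bf_sq_add power_mult mult.commute)
lemma p41: "(1 + fps_X^a :: bit fps)^4 = 1 + fps_X^(4*a)"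
  by (simp add: bf_p4_add power_mult mult.commute)

lemma LP_Suc: "LP b c (Suc n) = LP b c n * ((1 + fps_X^(b*n + (b-c))) * (1 + fps_X^(b*n + c)))"
  by (simp add: LP_def)
lemma qp_Suc': "qp (fps_X^b :: bit fps) (Suc n) = qp (fps_X^b) n * (1 + fps_X^(b*n + b))"
  by (simp add: qp_X algebra_simps)

lemma prod31: "qp (fps_X^3) n * LP 3 1 n = G (3*n)"
proof (induction n)
  case 0 then show ?case by (simp add: LP_def G_def)
next
  case (Suc n)
  have "G (3 * Suc n) = G (3*n) * (1 + fps_X^(3*n+1)) * (1 + fps_X^(3*n+2)) * (1 + fps_X^(3*n+3))"
  proof -
    have "3 * Suc n = Suc (Suc (Suc (3*n)))" by simp
    then show ?thesis by (simp only: G_Suc) (simp add: numeral_3_eq_3)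
  qed
  also have "\<dots> = (qp (fps_X^3) n * LP 3 1 n) * ((1 + fps_X^(3*n+3)) * ((1 + fps_X^(3*n + 2)) * (1 + fps_X^(3*n + 1))))"
    by (simp only: Suc.IH[symmetric]) (simp only: ac_simps)
  also have "\<dots> = qp (fps_X^3) (Suc n) * LP 3 1 (Suc n)"
    by (simp only: qp_Suc' LP_Suc) (simp add: ac_simps)
  finally show ?case ..
qed

lemma P_eq: "theta 3 1 = g 1"
proof (rule fps_ext)
  fix i :: nat
  define n where "n = 2*i + 1"
  have "theta 3 1 $ i = (qp (fps_X^3) n * LP 3 1 n) $ i" by (rule jtp_lim) (simp_all add: n_def)
  also have "\<dots> = G (3*n) $ i" by (simp only: prod31)
  also have "\<dots> = g 1 $ i" using g1_G[of i "3*n"] by (simp add: n_def eqm_def)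
  finally show "theta 3 1 $ i = g 1 $ i" .
qed

lemma prod41: "qp (fps_X^4) n * LP 4 1 n * G (2*n)^2 = G (4*n) * G n ^ 4"
proof (induction n)
  case 0 then show ?case by (simp add: LP_def G_def)
next
  case (Suc n)
  have g4: "G (4 * Suc n) = G (4*n) * (1 + fps_X^(4*n+1)) * (1 + fps_X^(4*n+2)) * (1 + fps_X^(4*n+3)) * (1 + fps_X^(4*n+4))"
  proof -
    have "4 * Suc n = Suc (Suc (Suc (Suc (4*n))))" by simp
    then show ?thesis by (simp only: G_Suc) (simp add: numeral_Bit0 numeral_3_eq_3)
  qed
  have g2: "G (2 * Suc n)^2 = G (2*n)^2 * (1 + fps_X^(4*n+2)) * (1 + fps_X^(4*n+4))"
  proof -
    have "2 * Suc n = Suc (Suc (2*n))" by simp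
    then have "G (2 * Suc n) = G (2*n) * (1 + fps_X^(Suc (2*n))) * (1 + fps_X^(Suc (Suc (2*n))))"
      by (simp only: G_Suc)
    then have "G (2 * Suc n)^2 = G (2*n)^2 * (1 + fps_X^(Suc (2*n)))^2 * (1 + fps_X^(Suc (Suc (2*n))))^2"
      by (simp add: power_mult_distrib)
    also have "\<dots> = G (2*n)^2 * (1 + fps_X^(4*n+2)) * (1 + fps_X^(4*n+4))"
    proof -
      have "2 * Suc (2*n) = 4*n+2" "2 * Suc (Suc (2*n)) = 4*n+4" by simp_all
      then show ?thesis by (simp only: sq1)
    qed
    finally show ?thesis .
  qed
  have g1: "G (Suc n)^4 = G n ^ 4 * (1 + fps_X^(4*n+4))"
  proof -
    have "4 * Suc n = 4*n+4" by simp
    then show ?thesis by (simp only: G_Suc power_mult_distrib p41)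
  qed
  have "qp (fps_X^4) (Suc n) * LP 4 1 (Suc n) * G (2 * Suc n)^2
      = (qp (fps_X^4) n * LP 4 1 n * G (2*n)^2) * ((1 + fps_X^(4*n+4)) * (1 + fps_X^(4*n+3)) * (1 + fps_X^(4*n+1)) * (1 + fps_X^(4*n+2)) * (1 + fps_X^(4*n+4)))"
    by (simp only: qp_Suc' LP_Suc g2) (simp add: ac_simps)
  also have "\<dots> = G (4*n) * G n ^ 4 * ((1 + fps_X^(4*n+4)) * (1 + fps_X^(4*n+3)) * (1 + fps_X^(4*n+1)) * (1 + fps_X^(4*n+2)) * (1 + fps_X^(4*n+4)))"
    by (simp only: Suc.IH)
  also have "\<dots> = G (4 * Suc n) * G (Suc n) ^ 4"
    by (simp only: g4 g1) (simp only: ac_simps)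
  finally show ?case .
qed

lemma T_eq: "theta 4 1 = g 1 ^ 3"
proof -
  have "theta 4 1 * g 1 ^ 2 = g 1 * g 1 ^ 4"
  proof (rule eqm_all)
    fix k
    show "eqm k (theta 4 1 * g 1 ^ 2) (g 1 * g 1 ^ 4)"
    proof (cases k)
      case 0 then show ?thesis by (simp add: eqm_def)
    next
      case (Suc i)
      define n where "n = 2*i + 1"
      have th: "eqm (Suc i) (theta 4 1) (qp (fps_X^4) n * LP 4 1 n)"
        unfolding eqm_def
      proof (intro allI impI)
        fix i' assume "i' < Suc i"
        then show "theta 4 1 $ i' = (qp (fps_X^4) n * LP 4 1 n) $ i'"
          by (intro jtp_lim) (auto simp: n_def)
      qed
      have a: "eqm (Suc i) (theta 4 1 * g 1 ^ 2) (qp (fps_X^4) n * LP 4 1 n * G (2*n)^2)"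
        by (intro eqm_mult eqm_power th g1_G) (simp add: n_def)
      have b: "eqm (Suc i) (G (4*n) * G n ^ 4) (g 1 * g 1 ^ 4)"
        by (intro eqm_mult eqm_power eqm_sym[OF g1_G]) (simp_all add: n_def)
      show ?thesis using eqm_trans[OF a, OF eqm_trans[OF _ b]] prod41 Suc by simp
    qed
  qed
  moreover have "g 1 * g 1 ^ 4 = g 1 ^ 3 * g 1 ^ 2"
    by (simp only: power_add[symmetric] power_Suc[symmetric]) simp
  ultimately have e: "theta 4 1 * g 1 ^ 2 = g 1 ^ 3 * g 1 ^ 2" by (simp only:)
  have ne: "g 1 ^ 2 \<noteq> 0" using g_ne0 by simp
  show ?thesis using mult_right_cancel[OF ne] e by blast
qed

unbundle fps_syntax

lemma L1: fixes I t :: int assumes "ev 4 1 t = 2*I"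
  shows "(\<exists>s. 3 * ev 3 1 s = 2*I) \<or> (\<exists>u. 2 + 9 * ev 4 1 u = 2*I)"
proof -
  define m where "m = t div 3"
  have "t mod 3 = 0 \<or> t mod 3 = 1 \<or> t mod 3 = 2" by auto
  moreover have tm: "t = 3*m + t mod 3" by (simp add: m_def)
  ultimately consider "t = 3*m" | "t = 3*m+1" | "t = 3*m+2" by auto
  then show ?thesis
  proof cases
    case 1
    have "3 * ev 3 1 (2*m) = ev 4 1 (3*m)" by (simp add: ev_def algebra_simps)
    then show ?thesis using assms 1 by metis
  next
    case 2
    have "2 + 9 * ev 4 1 (-m) = ev 4 1 (3*m+1)" by (simp add: ev_def algebra_simps)
    then show ?thesis using assms 2 by metis
  next
    case 3
    have "3 * ev 3 1 (-2*m-1) = ev 4 1 (3*m+2)" by (simp add: ev_def algebra_simps)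
    then show ?thesis using assms 3 by metis
  qed
qed

lemma L2: fixes I s :: int assumes "3 * ev 3 1 s = 2*I" shows "\<exists>t. ev 4 1 t = 2*I"
proof -
  define m where "m = s div 2"
  have "s = 2*m \<or> s = 2*m+1" unfolding m_def by presburger
  then consider "s = 2*m" | "s = 2*m+1" by blast
  then show ?thesis
  proof cases
    case 1
    have "ev 4 1 (3*m) = 3 * ev 3 1 (2*m)" by (simp add: ev_def algebra_simps)
    then show ?thesis using assms 1 by metis
  next
    case 2
    have "ev 4 1 (-3*m-1) = 3 * ev 3 1 (2*m+1)" by (simp add: ev_def algebra_simps)
    then show ?thesis using assms 2 by metis
  qed
qed

lemma L3: fixes I u :: int assumes "2 + 9 * ev 4 1 u = 2*I" shows "\<exists>t. ev 4 1 t = 2*I"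
proof -
  have "ev 4 1 (1 - 3*u) = 2 + 9 * ev 4 1 u" by (simp add: ev_def algebra_simps)
  then show ?thesis using assms by metis
qed

lemma excl: fixes x y I :: int shows "3 * x = 2*I \<Longrightarrow> 2 + 9*y = 2*I \<Longrightarrow> False"
  by presburger

lemma D1: "(3 dvd i \<and> (\<exists>s. ev 3 1 s = 2 * int (i div 3))) \<longleftrightarrow> (\<exists>s. 3 * ev 3 1 s = 2 * int i)"
proof
  assume "3 dvd i \<and> (\<exists>s. ev 3 1 s = 2 * int (i div 3))"
  then obtain k s where k: "i = 3*k" and s: "ev 3 1 s = 2 * int (i div 3)" by (auto elim: dvdE)
  then have "3 * ev 3 1 s = 2 * int i" by simp
  then show "\<exists>s. 3 * ev 3 1 s = 2 * int i" ..
next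
  assume "\<exists>s. 3 * ev 3 1 s = 2 * int i"
  then obtain s where s: "3 * ev 3 1 s = 2 * int i" by blast
  have "\<forall>x y::int. 3*x = 2*y \<longrightarrow> (\<exists>k. y = 3*k \<and> x = 2*k)" by presburger
  then obtain k where k: "int i = 3*k" "ev 3 1 s = 2*k" using s by blast
  then have "k \<ge> 0" by simp
  then have "i = 3 * nat k" using k by linarith
  then have "3 dvd i" "int (i div 3) = k" using \<open>k\<ge>0\<close> by simp_all
  then show "3 dvd i \<and> (\<exists>s. ev 3 1 s = 2 * int (i div 3))" using k by auto
qed

lemma D2: "(i \<noteq> 0 \<and> 9 dvd (i - 1) \<and> (\<exists>u. ev 4 1 u = 2 * int ((i - 1) div 9))) \<longleftrightarrow> (\<exists>u. 2 + 9 * ev 4 1 u = 2 * int i)"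
proof
  assume "i \<noteq> 0 \<and> 9 dvd (i - 1) \<and> (\<exists>u. ev 4 1 u = 2 * int ((i - 1) div 9))"
  then obtain k u where k: "i - 1 = 9*k" "i \<noteq> 0" and u: "ev 4 1 u = 2 * int ((i - 1) div 9)" by (auto elim: dvdE)
  then have "int i = 9 * int k + 1" by linarith
  moreover have "ev 4 1 u = 2 * int k" using u k by simp
  ultimately have "2 + 9 * ev 4 1 u = 2 * int i" by simp
  then show "\<exists>u. 2 + 9 * ev 4 1 u = 2 * int i" ..
next
  assume "\<exists>u. 2 + 9 * ev 4 1 u = 2 * int i"
  then obtain u where u: "2 + 9 * ev 4 1 u = 2 * int i" by blast
  have "\<forall>x y::int. 2 + 9*x = 2*y \<longrightarrow> (\<exists>k. y = 9*k + 1 \<and> x = 2*k)" by presburger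
  then obtain k where k: "int i = 9*k + 1" "ev 4 1 u = 2*k" using u by blast
  then have "k \<ge> 0" by linarith
  then have "i = 9 * nat k + 1" using k by linarith
  then have "i \<noteq> 0" "9 dvd (i - 1)" "int ((i - 1) div 9) = k" using \<open>k\<ge>0\<close> by simp_all
  then show "i \<noteq> 0 \<and> 9 dvd (i - 1) \<and> (\<exists>u. ev 4 1 u = 2 * int ((i - 1) div 9))" using k by auto
qed

lemma bit_of_bool_or: "\<not> (P \<and> Q) \<Longrightarrow> (of_bool (P \<or> Q) :: bit) = of_bool P + of_bool Q"
  by (cases P; cases Q) simp_all

lemma elem: "theta 4 1 = dil 3 (theta 3 1) + fps_X * dil 9 (theta 4 1)"
proof (rule fps_ext)
  fix i :: nat
  define A where "A = (\<exists>t. ev 4 1 t = 2 * int i)"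
  define B1 where "B1 = (\<exists>s. 3 * ev 3 1 s = 2 * int i)"
  define B2 where "B2 = (\<exists>u. 2 + 9 * ev 4 1 u = 2 * int i)"
  have AB: "A \<longleftrightarrow> B1 \<or> B2" unfolding A_def B1_def B2_def using L1 L2 L3 by blast
  have nB: "\<not> (B1 \<and> B2)" unfolding B1_def B2_def using excl by blast
  have r1: "dil 3 (theta 3 1) $ i = of_bool B1"
  proof (cases "3 dvd i")
    case True then show ?thesis using D1[of i] by (simp add: dil_nth theta_nth B1_def)
  next
    case False then show ?thesis using D1[of i] by (simp add: dil_nth B1_def)
  qed
  have r2: "(fps_X * dil 9 (theta 4 1)) $ i = of_bool B2"
  proof (cases "i \<noteq> 0 \<and> 9 dvd (i - 1)")
    case True then show ?thesis using D2[of i] by (simp add: dil_nth theta_nth B2_def)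
  next
    case False then show ?thesis using D2[of i] by (auto simp: dil_nth B2_def)
  qed
  have "theta 4 1 $ i = of_bool A" by (simp add: theta_nth A_def)
  also have "\<dots> = of_bool B1 + of_bool B2" using AB nB bit_of_bool_or by simp
  finally show "theta 4 1 $ i = (dil 3 (theta 3 1) + fps_X * dil 9 (theta 4 1)) $ i"
    using r1 r2 by simp
qed

lemma g_dil1: "k > 0 \<Longrightarrow> dil k (g r) = g (k * r) \<or> r = 0"
  using g_dil[of r k] by auto

lemma J: "g 1 ^ 3 = g 3 + fps_X * g 9 ^ 3"
proof -
  have g3: "g 3 = dil 3 (g 1)" using g_dil[of 1 3] by simp
  have g9: "g 9 = dil 9 (g 1)" using g_dil[of 1 9] by simp
  have "g 1 ^ 3 = dil 3 (theta 3 1) + fps_X * dil 9 (theta 4 1)" using T_eq elem by simp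
  also have "\<dots> = g 3 + fps_X * g 9 ^ 3"
  proof -
    have dp: "dil 9 (g 1 ^ 3) = dil 9 (g 1) ^ 3" by (simp add: dil_power)
    show ?thesis by (simp only: P_eq T_eq dp g3 g9)
  qed
  finally show ?thesis .
qed

lemma selfsim: assumes "F = fps_X * dil 3 F" shows "F = (0::bit fps)"
proof (rule fps_ext)
  fix n show "F $ n = 0 $ n"
  proof (induction n rule: less_induct)
    case (less n)
    show ?case
    proof (cases n)
      case 0 then show ?thesis by (subst assms) simp
    next
      case (Suc m)
      have "F $ n = (fps_X * dil 3 F) $ n" by (subst assms) simp
      also have "\<dots> = (if 3 dvd m then F $ (m div 3) else 0)" using Suc by (simp add: dil_nth)
      also have "\<dots> = 0" using less[of "m div 3"] Suc by auto
      finally show ?thesis by simp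
    qed
  qed
qed

lemma bf_eq_of_sum0: "(a::bit fps) + b = 0 \<Longrightarrow> a = b"
  by (metis add.assoc add_0 bf_add_self add.commute)

lemma B: "g 1 ^ 3 * g 3 ^ 3 = g 4 ^ 3 + fps_X * g 12 ^ 3"
proof -
  have d3: "dil 3 (g r) = g (3*r)" and d4: "dil 4 (g r) = g (4*r)" if "r > 0" for r
    using g_dil[of r 3] g_dil[of r 4] that by simp_all
  have J4: "g 4 ^ 3 = g 12 + fps_X^4 * g 36 ^ 3"
  proof -
    have "dil 4 (g 1 ^ 3) = dil 4 (g 3 + fps_X * g 9 ^ 3)" using J by simp
    then show ?thesis by (simp add: dil_power dil_add dil_mult dil_X d4)
  qed
  have g12: "g 3 ^ 4 = g 12"
  proof -
    have "g 6 = g 3 ^ 2" using g_frob[of 3] by simp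
    moreover have "g 12 = g 6 ^ 2" using g_frob[of 6] by simp
    ultimately show ?thesis by (simp flip: power_mult)
  qed
  define D where "D = g 1 ^ 3 * g 3 ^ 3 + g 4 ^ 3 + fps_X * g 12 ^ 3"
  have dD: "dil 3 D = g 3 ^ 3 * g 9 ^ 3 + g 12 ^ 3 + fps_X^3 * g 36 ^ 3"
    by (simp add: D_def dil_power dil_add dil_mult dil_X d3)
  have "D = fps_X * dil 3 D + (g 3 ^ 4 + g 12)"
    unfolding dD unfolding D_def J J4 by algebra
  also have "g 3 ^ 4 + g 12 = 0" by (simp add: g12 bf_add_self)
  finally have "D = 0" using selfsim by simp
  then show ?thesis unfolding D_def by (simp add: add.assoc bf_eq_of_sum0)
qed

unbundle fps_syntax

lemma sect_dil0: "0 < k \<Longrightarrow> sect k 0 (dil k Z) = Z"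
  using sect_Xpow_dil[of 0 k 0 Z] by simp
lemma sect_dilr: "0 < r \<Longrightarrow> r < k \<Longrightarrow> sect k r (dil k Z) = 0"
  using sect_Xpow_dil[of r k 0 Z] by simp

theorem mainTheorem4:
  fixes a :: "nat \<Rightarrow> int"
  assumes gen: "Abs_fps a * (f 2)^2 * f 3 = f 1 * f 6"
  shows "\<forall>n. even (a (24 * n + 13))"
proof -
  define A where "A = red (Abs_fps a)"
  have A_nth: "A $ k = of_int (a k)" for k by (simp add: A_def)
  have H: "A * g 2 ^ 2 * g 3 = g 1 * g 6"
    using arg_cong[OF gen, of red] by (simp add: red_mult red_power g_def A_def)
  have g2: "g 2 = g 1 ^ 2" using g_frob[of 1] by simp
  have g6: "g 6 = g 3 ^ 2" using g_frob[of 3] by simp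
  have g4: "g 4 = g 1 ^ 4" using g_frob[of 2] g2 by (simp flip: power_mult)
  have g12: "g 12 = g 3 ^ 4" using g_frob[of 6] g6 by (simp flip: power_mult)
  have d4: "dil 4 (g r) = g (4*r)" if "r > 0" for r using g_dil[of r 4] that by simp
  have d3: "dil 3 (g r) = g (3*r)" if "r > 0" for r using g_dil[of r 3] that by simp
  have ne13: "g 1 * g 3 \<noteq> 0" using g_ne0 by simp
  have "(A * g 1 ^ 3) * (g 1 * g 3) = A * g 2 ^ 2 * g 3" unfolding g2 by algebra
  also have "\<dots> = g 3 * (g 1 * g 3)" unfolding H g6 by algebra
  finally have Ag: "A * g 1 ^ 3 = g 3" using mult_right_cancel[OF ne13] by blast
  define u where "u = g 4"
  define v where "v = g 12"
  define D where "D = u^3 + fps_X * v^3"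
  have AD: "A * D = v"
  proof -
    have "A * D = A * (g 1 ^ 3 * g 3 ^ 3)" unfolding D_def u_def v_def using B by simp
    also have "\<dots> = (A * g 1 ^ 3) * g 3 ^ 3" by (simp add: mult.assoc)
    also have "\<dots> = g 3 ^ 4" unfolding Ag by (simp flip: power_Suc)
    finally show ?thesis unfolding v_def g12 .
  qed
  define W where "W = g 1 ^ 12 + fps_X * g 3 ^ 12"
  have D4: "D^4 = dil 4 W"
  proof -
    have "D^4 = (u^3)^4 + fps_X^4 * (v^3)^4" unfolding D_def by (simp add: bf_p4_add power_mult_distrib)
    also have "\<dots> = dil 4 W" unfolding W_def u_def v_def
      by (simp add: dil_add dil_mult dil_power dil_X d4 flip: power_mult)
    finally show ?thesis .
  qed
  have AD4: "A * D^4 = v * D^3"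
  proof -
    have "A * D^4 = (A * D) * D^3" by (simp add: power_Suc[symmetric] mult.assoc numeral_Bit0 eval_nat_numeral)
    then show ?thesis using AD by simp
  qed
  have vD3: "v * D^3 = dil 4 (g 3 * g 1 ^ 9) + fps_X * dil 4 (g 3 * g 1 ^ 6 * g 3 ^ 3)
      + fps_X^2 * dil 4 (g 3 * g 1 ^ 3 * g 3 ^ 6) + fps_X^3 * dil 4 (g 3 * g 3 ^ 9)"
  proof -
    have "v * D^3 = v * ((u^3)^3 + (u^3)^2 * (fps_X * v^3) + u^3 * (fps_X * v^3)^2 + (fps_X * v^3)^3)"
      unfolding D_def by (simp add: bf_cube_add)
    also have "\<dots> = dil 4 (g 3 * g 1 ^ 9) + fps_X * dil 4 (g 3 * g 1 ^ 6 * g 3 ^ 3)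
      + fps_X^2 * dil 4 (g 3 * g 1 ^ 3 * g 3 ^ 6) + fps_X^3 * dil 4 (g 3 * g 3 ^ 9)"
      unfolding u_def v_def by (simp add: dil_mult dil_power d4) algebra
    finally show ?thesis .
  qed
  have S1: "sect 4 1 (A * D^4) = sect 4 1 A * W" unfolding D4 by (rule sect_mult_dil) simp
  have S2: "sect 4 1 (v * D^3) = g 3 * g 1 ^ 6 * g 3 ^ 3"
  proof -
    have a0: "sect 4 1 (dil 4 (g 3 * g 1 ^ 9)) = 0" by (rule sect_dilr) simp_all
    have a1: "sect 4 1 (fps_X * dil 4 (g 3 * g 1 ^ 6 * g 3 ^ 3)) = g 3 * g 1 ^ 6 * g 3 ^ 3"
      using sect_Xpow_dil[of 1 4 1] by simp
    have a2: "sect 4 1 (fps_X^2 * dil 4 (g 3 * g 1 ^ 3 * g 3 ^ 6)) = 0"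
      using sect_Xpow_dil[of 1 4 2] by simp
    have a3: "sect 4 1 (fps_X^3 * dil 4 (g 3 * g 3 ^ 9)) = 0"
      using sect_Xpow_dil[of 1 4 3] by simp
    show ?thesis unfolding vD3 by (simp only: sect_add a0 a1 a2 a3) simp
  qed
  have WB: "W = g 1 ^ 3 * g 3 ^ 3" unfolding W_def B g4 g12 by (simp flip: power_mult)
  have ne33: "g 1 ^ 3 * g 3 ^ 3 \<noteq> 0" using g_ne0 by simp
  have "sect 4 1 A * (g 1 ^ 3 * g 3 ^ 3) = (g 1 ^ 3 * g 3) * (g 1 ^ 3 * g 3 ^ 3)"
  proof -
    have "sect 4 1 A * (g 1 ^ 3 * g 3 ^ 3) = g 3 * g 1 ^ 6 * g 3 ^ 3" using S1 S2 AD4 WB by simp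
    also have "\<dots> = (g 1 ^ 3 * g 3) * (g 1 ^ 3 * g 3 ^ 3)" by algebra
    finally show ?thesis .
  qed
  then have S41: "sect 4 1 A = g 1 ^ 3 * g 3" using mult_right_cancel[OF ne33] by blast
  have dis: "g 1 ^ 3 * g 3 = dil 3 (g 1 ^ 2) + fps_X * dil 3 (g 3 ^ 3 * g 1)"
  proof -
    have "g 1 ^ 3 * g 3 = (g 3 + fps_X * g 9 ^ 3) * g 3" by (simp only: J)
    also have "\<dots> = dil 3 (g 1 ^ 2) + fps_X * dil 3 (g 3 ^ 3 * g 1)"
      by (simp add: dil_mult dil_power d3) algebra
    finally show ?thesis .
  qed
  have S30: "sect 3 0 (g 1 ^ 3 * g 3) = g 1 ^ 2"
    unfolding dis sect_add using sect_Xpow_dil[of 0 3 1] sect_dil0[of 3] by simp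
  have S21: "sect 2 1 (g 1 ^ 2) = 0" unfolding frob by (rule sect_dilr) simp_all
  have "sect 24 13 A = sect 2 1 (sect 3 0 (sect 4 1 A))" by (simp add: sect_sect)
  also have "\<dots> = 0" unfolding S41 S30 S21 ..
  finally have Z: "sect 24 13 A = 0" .
  show ?thesis
  proof
    fix n
    have "A $ (24 * n + 13) = sect 24 13 A $ n" by simp
    then have "(of_int (a (24 * n + 13)) :: bit) = 0" using Z A_nth by simp
    then show "even (a (24 * n + 13))" by (simp add: bit_of_int_eq0)
  qed
qed

end
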